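(* Let $\bm{\sigma}=[\mathcal{T}_0,\dots,\mathcal{T}_N]$ be a finite trajectory, $\varphi_1,\varphi_2$ MTL formulas, and suppose binary variables $\xi^b_{\varphi_i,j}\in\{0,1\}$ satisfy $\xi^b_{\varphi_i,j}=1\Leftrightarrow\bm{\sigma}\models_j\varphi_i$ for $i=1,2$ and all relevant $j$. Let $k$ be a time index and $t_1\le t_2$ nonnegative integers with $k+t_2\le N$, and let $\tau=t_2-t_1+1$. Then $\bm{\sigma}\models_k \varphi_1\,\mathcal{U}_{[\![t_1,t_2]\!]}\,\varphi_2$ if and only if the following $\tau$ linear inequalities hold: $$\sum_{j=k+t_1}^{k+t_2}\xi^b_{\varphi_2,j}\ge1,$$ $$\xi^b_{\varphi_2,t}\le\sum_{j=k+t_1}^{t-1}\left(\frac{\xi^b_{\varphi_1,j}}{t-t_1-k}+\xi^b_{\varphi_2,j}\right)\quad\text{for all integers } t \text{ with } k+t_1<t\le k+t_2.$$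
   Context: MTL semantics on a finite trajectory $\bm{\sigma}=[\mathcal{T}_0,\dots,\mathcal{T}_N]$, $\mathcal{T}_k\subseteq\mathcal{P}$. The (nonstandard) until operator is defined by: $\bm{\sigma}\models_k\varphi_1\,\mathcal{U}_{[\![t_1,t_2]\!]}\,\varphi_2$ iff there exists an integer $t\in[k+t_1,k+t_2]$ with $\bm{\sigma}\models_t\varphi_2$ and $\bm{\sigma}\models_{t'}\varphi_1$ for all integers $t'$ with $k+t_1\le t'<t$. Here $[\![a,b]\!]$ denotes the integers in $[a,b]$. *)

theory Defs
  imports Complex_Main
begin

datatype 'p mtl =
    MTrue
  | Prop 'p
  | Not "'p mtl"
  | And "'p mtl" "'p mtl"
  | Until "'p mtl" nat nat "'p mtl"

fun sat :: "'p set list \<Rightarrow> nat \<Rightarrow> 'p mtl \<Rightarrow> bool" where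
  "sat \<sigma> k MTrue = True"
| "sat \<sigma> k (Prop p) = (k < length \<sigma> \<and> p \<in> \<sigma> ! k)"
| "sat \<sigma> k (Not \<phi>) = (\<not> sat \<sigma> k \<phi>)"
| "sat \<sigma> k (And \<phi> \<psi>) = (sat \<sigma> k \<phi> \<and> sat \<sigma> k \<psi>)"
| "sat \<sigma> k (Until \<phi>1 t1 t2 \<phi>2) =
     (\<exists>t\<in>{k+t1..k+t2}. sat \<sigma> t \<phi>2 \<and> (\<forall>t'. k+t1 \<le> t' \<and> t' < t \<longrightarrow> sat \<sigma> t' \<phi>1))"

end

theory Submission
  imports Defs
begin

lemma sum_all_one:
  fixes f :: "nat \<Rightarrow> real"
  assumes "\<And>j. f j \<in> {0,1}" and "finite A" and "sum f A \<ge> real (card A)"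
  shows "\<forall>j\<in>A. f j = 1"
proof -
  have "sum (\<lambda>j. 1 - f j) A = real (card A) - sum f A"
    by (simp add: sum_subtractf)
  hence le: "sum (\<lambda>j. 1 - f j) A \<le> 0" using assms(3) by simp
  have nn: "\<forall>j\<in>A. 0 \<le> 1 - f j"
  proof
    fix j
    have "f j = 0 \<or> f j = 1" using assms(1)[of j] by simp
    thus "0 \<le> 1 - f j" by auto
  qed
  have "0 \<le> sum (\<lambda>j. 1 - f j) A" using nn by (simp add: sum_nonneg)
  hence "sum (\<lambda>j. 1 - f j) A = 0" using le by linarith
  moreover have "(\<And>j. j \<in> A \<Longrightarrow> 0 \<le> 1 - f j)" using nn by blast
  ultimately have "\<forall>j\<in>A. 1 - f j = 0"
    using sum_nonneg_eq_0_iff[OF assms(2), of "\<lambda>j. 1 - f j"] by simp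
  thus ?thesis by simp
qed

theorem proposition4:
  fixes \<sigma> :: "'p set list" and N k t1 t2 :: nat
    and \<phi>1 \<phi>2 :: "'p mtl" and xi1 xi2 :: "nat \<Rightarrow> real"
  assumes "length \<sigma> = N + 1"
    and "\<And>j. xi1 j \<in> {0, 1}" and "\<And>j. xi2 j \<in> {0, 1}"
    and "\<And>j. j \<le> N \<Longrightarrow> (xi1 j = 1 \<longleftrightarrow> sat \<sigma> j \<phi>1)"
    and "\<And>j. j \<le> N \<Longrightarrow> (xi2 j = 1 \<longleftrightarrow> sat \<sigma> j \<phi>2)"
    and "t1 \<le> t2" and "k + t2 \<le> N"
  shows "sat \<sigma> k (Until \<phi>1 t1 t2 \<phi>2) \<longleftrightarrow>
    ((\<Sum>j = k+t1..k+t2. xi2 j) \<ge> 1 \<and>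
     (\<forall>t::nat. k + t1 < t \<and> t \<le> k + t2 \<longrightarrow>
        xi2 t \<le> (\<Sum>j = k+t1..t-1. xi1 j / real (t - t1 - k) + xi2 j)))"
proof -
  define a where "a = k + t1"
  define b where "b = k + t2"
  have nn1: "\<And>j. 0 \<le> xi1 j" and nn2: "\<And>j. 0 \<le> xi2 j"
  proof -
    fix j
    have "xi1 j = 0 \<or> xi1 j = 1" "xi2 j = 0 \<or> xi2 j = 1" using assms(2,3)[of j] by simp_all
    thus "0 \<le> xi1 j" "0 \<le> xi2 j" by auto
  qed
  have le1: "\<And>j. xi2 j \<le> 1"
  proof -
    fix j
    have "xi2 j = 0 \<or> xi2 j = 1" using assms(3)[of j] by simp
    thus "xi2 j \<le> 1" by auto
  qed
  have split: "\<And>t. (\<Sum>j = a..t-1. xi1 j / real (t - t1 - k) + xi2 j)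
      = (\<Sum>j = a..t-1. xi1 j) / real (t - a) + (\<Sum>j = a..t-1. xi2 j)"
    by (simp add: sum.distrib sum_divide_distrib a_def diff_diff_left add.commute)
  have card: "\<And>t. a < t \<Longrightarrow> card {a..t-1} = t - a" by simp
  have "sat \<sigma> k (Until \<phi>1 t1 t2 \<phi>2) \<longleftrightarrow>
    (\<exists>t\<in>{a..b}. xi2 t = 1 \<and> (\<forall>t'. a \<le> t' \<and> t' < t \<longrightarrow> xi1 t' = 1))"
  proof -
    have e2: "\<And>t. t \<in> {a..b} \<Longrightarrow> sat \<sigma> t \<phi>2 = (xi2 t = 1)"
      using assms(5,7) b_def by auto
    have e1: "\<And>t t'. t \<in> {a..b} \<Longrightarrow> t' < t \<Longrightarrow> sat \<sigma> t' \<phi>1 = (xi1 t' = 1)"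
      using assms(4,7) b_def by auto
    show ?thesis unfolding sat.simps a_def[symmetric] b_def[symmetric]
      using e1 e2 by (meson atLeastAtMost_iff)
  qed
  also have "\<dots> \<longleftrightarrow> ((\<Sum>j = a..b. xi2 j) \<ge> 1 \<and>
     (\<forall>t::nat. a < t \<and> t \<le> b \<longrightarrow>
        xi2 t \<le> (\<Sum>j = a..t-1. xi1 j) / real (t - a) + (\<Sum>j = a..t-1. xi2 j)))"
  proof
    assume "\<exists>t\<in>{a..b}. xi2 t = 1 \<and> (\<forall>t'. a \<le> t' \<and> t' < t \<longrightarrow> xi1 t' = 1)"
    then obtain t0 where t0: "t0 \<in> {a..b}" "xi2 t0 = 1" "\<forall>t'. a \<le> t' \<and> t' < t0 \<longrightarrow> xi1 t' = 1" by blast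
    have "1 \<le> (\<Sum>j = a..b. xi2 j)"
      using member_le_sum[of t0 "{a..b}" xi2] t0 nn2 by simp
    moreover have "xi2 t \<le> (\<Sum>j = a..t-1. xi1 j) / real (t - a) + (\<Sum>j = a..t-1. xi2 j)"
      if "a < t" "t \<le> b" for t
    proof -
      have A: "0 \<le> (\<Sum>j = a..t-1. xi1 j) / real (t - a)" using nn1 by (simp add: sum_nonneg)
      have B: "0 \<le> (\<Sum>j = a..t-1. xi2 j)" using nn2 by (simp add: sum_nonneg)
      show ?thesis
      proof (cases "t0 < t")
        case True
        hence "1 \<le> (\<Sum>j = a..t-1. xi2 j)"
          using member_le_sum[of t0 "{a..t-1}" xi2] t0 nn2 by simp
        thus ?thesis using A le1[of t] by (smt (verit))
      next
        case False
        hence "\<forall>j\<in>{a..t-1}. xi1 j = 1" using t0 that by auto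
        hence "(\<Sum>j = a..t-1. xi1 j) = real (t - a)" using that by simp
        hence "(\<Sum>j = a..t-1. xi1 j) / real (t - a) = 1" using that by simp
        thus ?thesis using B le1[of t] by (smt (verit))
      qed
    qed
    ultimately show "((\<Sum>j = a..b. xi2 j) \<ge> 1 \<and>
     (\<forall>t::nat. a < t \<and> t \<le> b \<longrightarrow>
        xi2 t \<le> (\<Sum>j = a..t-1. xi1 j) / real (t - a) + (\<Sum>j = a..t-1. xi2 j)))" by blast
  next
    assume H: "((\<Sum>j = a..b. xi2 j) \<ge> 1 \<and>
     (\<forall>t::nat. a < t \<and> t \<le> b \<longrightarrow>
        xi2 t \<le> (\<Sum>j = a..t-1. xi1 j) / real (t - a) + (\<Sum>j = a..t-1. xi2 j)))"
    have "\<exists>t\<in>{a..b}. xi2 t = 1"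
    proof (rule ccontr)
      assume "\<not> ?thesis"
      hence "\<forall>t\<in>{a..b}. xi2 t = 0" using assms(3) by blast
      hence "(\<Sum>j = a..b. xi2 j) = 0" by simp
      thus False using H by simp
    qed
    then obtain t0 where t0: "t0 \<in> {a..b}" "xi2 t0 = 1" "\<forall>s. s < t0 \<longrightarrow> \<not> (s \<in> {a..b} \<and> xi2 s = 1)"
      using exists_least_iff[of "\<lambda>t. t \<in> {a..b} \<and> xi2 t = 1"] by blast
    show "\<exists>t\<in>{a..b}. xi2 t = 1 \<and> (\<forall>t'. a \<le> t' \<and> t' < t \<longrightarrow> xi1 t' = 1)"
    proof (cases "t0 = a")
      case True
      thus ?thesis using t0 by auto
    next
      case False
      hence lt: "a < t0" using t0 by simp
      have "\<forall>j\<in>{a..t0-1}. xi2 j = 0" using t0 lt assms(3) by fastforce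
      hence "(\<Sum>j = a..t0-1. xi2 j) = 0" by simp
      moreover have "xi2 t0 \<le> (\<Sum>j = a..t0-1. xi1 j) / real (t0 - a) + (\<Sum>j = a..t0-1. xi2 j)"
        using H t0(1) lt by simp
      ultimately have "1 \<le> (\<Sum>j = a..t0-1. xi1 j) / real (t0 - a)" using t0(2) by simp
      moreover have pos: "0 < real (t0 - a)" using lt by simp
      ultimately have "real (t0 - a) \<le> (\<Sum>j = a..t0-1. xi1 j)"
        using pos_le_divide_eq[OF pos] by simp
      moreover have "card {a..t0-1} = t0 - a" using lt by simp
      ultimately have "real (card {a..t0-1}) \<le> (\<Sum>j = a..t0-1. xi1 j)" by simp
      hence "\<forall>j\<in>{a..t0-1}. xi1 j = 1"
        by (rule sum_all_one[OF assms(2) finite_atLeastAtMost])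
      thus ?thesis using t0 lt by auto
    qed
  qed
  finally have F: "sat \<sigma> k (Until \<phi>1 t1 t2 \<phi>2) \<longleftrightarrow> ((\<Sum>j = a..b. xi2 j) \<ge> 1 \<and>
     (\<forall>t::nat. a < t \<and> t \<le> b \<longrightarrow>
        xi2 t \<le> (\<Sum>j = a..t-1. xi1 j) / real (t - a) + (\<Sum>j = a..t-1. xi2 j)))" .
  show ?thesis unfolding a_def[symmetric] b_def[symmetric] split using F .
qed

end
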